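(* Assume $G$ is connected. Let $S_n\subset V$ be nonempty with $S_n\ne V$, let $\delta t>0$ and $m>0$, and let $\mathcal V_m=\{u\in\mathcal V:-m\le u_i\le m\ \forall i\}$. Let $$F(u)=\mathrm{TV}^q_a(u)+\frac1{\delta t}\langle u,sd^{\Sigma_n}\rangle_{\mathcal V}.$$ Then $F$ has a minimizer over $\mathcal V_m$. Moreover, for every minimizer $u$ of $F$ over $\mathcal V_m$ and every $s\in(-m,m)$, the superlevel set $E(s)=\{i\in V:u_i>s\}$ minimizes $\hat S\mapsto\mathcal F(\hat S,S_n)$ over all subsets $\hat S\subset V$, where $$\mathcal F(\hat S,S_n)=\mathrm{TV}^q_a(\chi_{\hat S})-\mathrm{TV}^q_a(\chi_{S_n})+\frac1{\delta t}\big\langle\chi_{\hat S}-\chi_{S_n},(\chi_{\hat S}-\chi_{S_n})\,d^{\Sigma_n}\big\rangle_{\mathcal V}.$$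
   Context: $G=(V,E)$ is a finite undirected weighted graph with vertex set $V=\{1,\dots,n\}$. The weights satisfy $\omega_{ij}=\omega_{ji}\ge0$, with $\omega_{ij}>0$ iff $\{i,j\}\in E$, and $\omega_{ii}=0$. The degrees are $d_i=\sum_j\omega_{ij}>0$. Parameters $r\in[0,1]$ and $q\in[1/2,1]$ are fixed, and $\omega_{ij}^q:=0$ when $\omega_{ij}=0$. $\mathcal V$ is the space of functions $V\to\mathbb R$ with $\langle u,v\rangle_{\mathcal V}=\sum_iu_iv_id_i^r$, and $\chi_S$ is the indicator of $S$. The anisotropic total variation is $\mathrm{TV}^q_a(u)=\frac12\sum_{i,j}\omega_{ij}^q|u_i-u_j|$. Graph distance: each edge $\{i,j\}$ with $\omega_{ij}>0$ has length $\omega_{ij}^{q-1}$. The distance $d^G_{ij}$ is the minimal total length of a path from $i$ to $j$, with $d^G_{ii}=0$. For nonempty $T\subset V$, $d^T_i=\min_{j\in T}d^G_{ij}$. $\Sigma_n$ is the set of nodes incident to some edge $\{i,j\}$ with $\omega_{ij}>0$, $i\in S_n$, $j\notin S_n$. The signed distance is $sd^{\Sigma_n}=(\chi_{V\setminus S_n}-\chi_{S_n})\,d^{\Sigma_n}$ (pointwise product). *)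

theory Defs
  imports Complex_Main
begin

(* Vertex set V = {1..n}; weights w :: nat => nat => real; functions on V are nat => real
   (values outside V are irrelevant). *)

definition deg :: "nat \<Rightarrow> (nat \<Rightarrow> nat \<Rightarrow> real) \<Rightarrow> nat \<Rightarrow> real" where
  "deg n w i = (\<Sum>j\<in>{1..n}. w i j)"

definition ip :: "nat \<Rightarrow> (nat \<Rightarrow> nat \<Rightarrow> real) \<Rightarrow> real \<Rightarrow> (nat \<Rightarrow> real) \<Rightarrow> (nat \<Rightarrow> real) \<Rightarrow> real" where
  "ip n w r u v = (\<Sum>i\<in>{1..n}. u i * v i * deg n w i powr r)"

definition chi :: "nat set \<Rightarrow> nat \<Rightarrow> real" where
  "chi S i = (if i \<in> S then 1 else 0)"

(* note: 0 powr q = 0 in Isabelle, matching the convention w^q := 0 when w = 0 *)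
definition TVa :: "nat \<Rightarrow> (nat \<Rightarrow> nat \<Rightarrow> real) \<Rightarrow> real \<Rightarrow> (nat \<Rightarrow> real) \<Rightarrow> real" where
  "TVa n w q u = (1/2) * (\<Sum>i\<in>{1..n}. \<Sum>j\<in>{1..n}. w i j powr q * \<bar>u i - u j\<bar>)"

definition is_path :: "nat \<Rightarrow> (nat \<Rightarrow> nat \<Rightarrow> real) \<Rightarrow> nat list \<Rightarrow> nat \<Rightarrow> nat \<Rightarrow> bool" where
  "is_path n w p i j \<longleftrightarrow> p \<noteq> [] \<and> hd p = i \<and> last p = j \<and> set p \<subseteq> {1..n} \<and>
     (\<forall>k. Suc k < length p \<longrightarrow> w (p ! k) (p ! Suc k) > 0)"

definition path_len :: "(nat \<Rightarrow> nat \<Rightarrow> real) \<Rightarrow> real \<Rightarrow> nat list \<Rightarrow> real" where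
  "path_len w q p = (\<Sum>k<length p - 1. w (p ! k) (p ! Suc k) powr (q - 1))"

definition connected_graph :: "nat \<Rightarrow> (nat \<Rightarrow> nat \<Rightarrow> real) \<Rightarrow> bool" where
  "connected_graph n w \<longleftrightarrow> (\<forall>i\<in>{1..n}. \<forall>j\<in>{1..n}. \<exists>p. is_path n w p i j)"

(* graph distance: minimal total length of a path (the infimum is attained) *)
definition dG :: "nat \<Rightarrow> (nat \<Rightarrow> nat \<Rightarrow> real) \<Rightarrow> real \<Rightarrow> nat \<Rightarrow> nat \<Rightarrow> real" where
  "dG n w q i j = (if i = j then 0 else Inf {path_len w q p | p. is_path n w p i j})"

definition dSet :: "nat \<Rightarrow> (nat \<Rightarrow> nat \<Rightarrow> real) \<Rightarrow> real \<Rightarrow> nat set \<Rightarrow> nat \<Rightarrow> real" where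
  "dSet n w q T i = Min ((\<lambda>j. dG n w q i j) ` T)"

definition Sigma_bd :: "nat \<Rightarrow> (nat \<Rightarrow> nat \<Rightarrow> real) \<Rightarrow> nat set \<Rightarrow> nat set" where
  "Sigma_bd n w S = {k. \<exists>i j. i \<in> S \<and> j \<in> {1..n} - S \<and> w i j > 0 \<and> (k = i \<or> k = j)}"

definition sd :: "nat \<Rightarrow> (nat \<Rightarrow> nat \<Rightarrow> real) \<Rightarrow> real \<Rightarrow> nat set \<Rightarrow> nat \<Rightarrow> real" where
  "sd n w q S i = (chi ({1..n} - S) i - chi S i) * dSet n w q (Sigma_bd n w S) i"

definition Fu :: "nat \<Rightarrow> (nat \<Rightarrow> nat \<Rightarrow> real) \<Rightarrow> real \<Rightarrow> real \<Rightarrow> real \<Rightarrow> nat set \<Rightarrow> (nat \<Rightarrow> real) \<Rightarrow> real" where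
  "Fu n w r q dt S u = TVa n w q u + (1 / dt) * ip n w r u (sd n w q S)"

definition FS :: "nat \<Rightarrow> (nat \<Rightarrow> nat \<Rightarrow> real) \<Rightarrow> real \<Rightarrow> real \<Rightarrow> real \<Rightarrow> nat set \<Rightarrow> nat set \<Rightarrow> real" where
  "FS n w r q dt S' S = TVa n w q (chi S') - TVa n w q (chi S)
     + (1 / dt) * ip n w r (\<lambda>i. chi S' i - chi S i)
          (\<lambda>i. (chi S' i - chi S i) * dSet n w q (Sigma_bd n w S) i)"

definition box :: "nat \<Rightarrow> real \<Rightarrow> (nat \<Rightarrow> real) set" where
  "box n m = {u. \<forall>i\<in>{1..n}. - m \<le> u i \<and> u i \<le> m}"

end

theory Submission
  imports Defs
begin

definition Lc :: "nat \<Rightarrow> (nat \<Rightarrow> real) \<Rightarrow> (nat \<Rightarrow> real) \<Rightarrow> real" where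
  "Lc n c u = (\<Sum>i\<in>{1..n}. c i * u i)"

definition HH :: "nat \<Rightarrow> (nat \<Rightarrow> nat \<Rightarrow> real) \<Rightarrow> real \<Rightarrow> (nat \<Rightarrow> real) \<Rightarrow> real \<Rightarrow> (nat \<Rightarrow> real) \<Rightarrow> real" where
  "HH n w q c a u = TVa n w q u + Lc n c (\<lambda>i. u i - a)"

definition GG :: "nat \<Rightarrow> (nat \<Rightarrow> nat \<Rightarrow> real) \<Rightarrow> real \<Rightarrow> (nat \<Rightarrow> real) \<Rightarrow> nat set \<Rightarrow> real" where
  "GG n w q c E = TVa n w q (chi E) + Lc n c (chi E)"

lemma abs_split: "\<bar>x - y\<bar> = \<bar>max x c - max y c\<bar> + \<bar>min x c - min (y::real) c\<bar>"
  by (auto simp: max_def min_def abs_if)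

lemma HH_split: "HH n w q c a u = HH n w q c b (\<lambda>i. max (u i) b) + HH n w q c a (\<lambda>i. min (u i) b)"
proof -
  have tv: "TVa n w q u = TVa n w q (\<lambda>i. max (u i) b) + TVa n w q (\<lambda>i. min (u i) b)"
  proof -
    have "(\<Sum>i\<in>{1..n}. \<Sum>j\<in>{1..n}. w i j powr q * \<bar>u i - u j\<bar>)
      = (\<Sum>i\<in>{1..n}. \<Sum>j\<in>{1..n}. w i j powr q * \<bar>max (u i) b - max (u j) b\<bar>
            + w i j powr q * \<bar>min (u i) b - min (u j) b\<bar>)"
      by (intro sum.cong refl, subst abs_split[of _ _ b], simp add: algebra_simps)
    also have "\<dots> = (\<Sum>i\<in>{1..n}. \<Sum>j\<in>{1..n}. w i j powr q * \<bar>max (u i) b - max (u j) b\<bar>)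
       + (\<Sum>i\<in>{1..n}. \<Sum>j\<in>{1..n}. w i j powr q * \<bar>min (u i) b - min (u j) b\<bar>)"
      by (simp add: sum.distrib)
    finally show ?thesis unfolding TVa_def by (simp add: algebra_simps)
  qed
  have l: "Lc n c (\<lambda>i. u i - a) = Lc n c (\<lambda>i. max (u i) b - b) + Lc n c (\<lambda>i. min (u i) b - a)"
    unfolding Lc_def sum.distrib[symmetric]
    by (rule sum.cong) (auto simp: max_def min_def algebra_simps)
  show ?thesis unfolding HH_def using tv l by simp
qed

lemma HH_layer:
  assumes "\<forall>i\<in>{1..n}. v i = a + t * chi E i" "t \<ge> 0"
  shows "HH n w q c a v = t * GG n w q c E"
proof -
  have tv: "TVa n w q v = t * TVa n w q (chi E)"
  proof -
    have "(\<Sum>i\<in>{1..n}. \<Sum>j\<in>{1..n}. w i j powr q * \<bar>v i - v j\<bar>)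
      = (\<Sum>i\<in>{1..n}. \<Sum>j\<in>{1..n}. t * (w i j powr q * \<bar>chi E i - chi E j\<bar>))"
    proof (intro sum.cong refl)
      fix i j assume "i \<in> {1..n}" "j \<in> {1..n}"
      then have "v i - v j = t * (chi E i - chi E j)" using assms(1) by (simp add: algebra_simps)
      then show "w i j powr q * \<bar>v i - v j\<bar> = t * (w i j powr q * \<bar>chi E i - chi E j\<bar>)"
        using assms(2) by (simp add: abs_mult)
    qed
    then show ?thesis unfolding TVa_def by (simp add: sum_distrib_left)
  qed
  have l: "Lc n c (\<lambda>i. v i - a) = t * Lc n c (chi E)"
    unfolding Lc_def using assms(1) by (simp add: sum_distrib_left algebra_simps)
  show ?thesis unfolding HH_def GG_def using tv l by (simp add: algebra_simps)
qed

lemma HH_lower: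
  assumes g: "\<forall>E. E \<subseteq> {1..n} \<longrightarrow> g \<le> GG n w q c E" "g \<le> 0"
  shows "(\<forall>i\<in>{1..n}. a \<le> u i \<and> u i \<le> b) \<Longrightarrow> a \<le> b \<Longrightarrow> (b - a) * g \<le> HH n w q c a u"
proof (induction "card (u ` {1..n} \<union> {a})" arbitrary: u b rule: less_induct)
  case less
  define A where "A = u ` {1..n} \<union> {a}"
  have finA: "finite A" "A \<noteq> {}" unfolding A_def by auto
  define M where "M = Max A"
  have MA: "M \<in> A" unfolding M_def using finA by simp
  have leM: "\<And>x. x \<in> A \<Longrightarrow> x \<le> M" unfolding M_def using finA by simp
  have aM: "a \<le> M" using leM A_def by auto
  show ?case
  proof (cases "M = a")
    case True
    have "\<forall>i\<in>{1..n}. u i = a + 0 * chi {} i"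
    proof
      fix i assume i: "i \<in> {1..n}"
      have "u i \<in> A" using i A_def by blast
      have "a \<le> u i" using less.prems(1) i by blast
      then show "u i = a + 0 * chi {} i" using leM[of "u i"] True \<open>u i \<in> A\<close> by (simp add: chi_def)
    qed
    then have "HH n w q c a u = 0" using HH_layer[of n u a 0 "{}"] by simp
    then show ?thesis using less.prems(2) g(2) by (simp add: mult_nonneg_nonpos)
  next
    case False
    then have aM': "a < M" using aM by simp
    define B where "B = A - {M}"
    have aB: "a \<in> B" using False unfolding B_def A_def by auto
    have finB: "finite B" "B \<noteq> {}" using finA(1) aB unfolding B_def by auto
    define M' where "M' = Max B"
    have M'B: "M' \<in> B" unfolding M'_def using finB by simp
    have leM': "\<And>x. x \<in> B \<Longrightarrow> x \<le> M'" unfolding M'_def using finB by simp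
    have aM'': "a \<le> M'" using leM' aB by auto
    have M'A: "M' \<in> A" "M' \<noteq> M" using M'B unfolding B_def by auto
    have M'M: "M' < M" using M'A leM[of M'] by auto
    define E where "E = {i\<in>{1..n}. u i > M'}"
    have lay: "\<forall>i\<in>{1..n}. max (u i) M' = M' + (M - M') * chi E i"
    proof
      fix i assume i: "i \<in> {1..n}"
      show "max (u i) M' = M' + (M - M') * chi E i"
      proof (cases "u i > M'")
        case True
        have "u i \<in> A" using i A_def by auto
        have "u i = M"
        proof (rule ccontr)
          assume "u i \<noteq> M"
          then have "u i \<in> B" using \<open>u i \<in> A\<close> unfolding B_def by auto
          then show False using True leM'[of "u i"] by auto
        qed
        then show ?thesis using True i by (simp add: E_def chi_def)
      next
        case False
        then show ?thesis using i by (simp add: E_def chi_def)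
      qed
    qed
    have h1: "HH n w q c M' (\<lambda>i. max (u i) M') = (M - M') * GG n w q c E"
      by (rule HH_layer) (use lay M'M in auto)
    have "E \<subseteq> {1..n}" unfolding E_def by auto
    then have gE: "g \<le> GG n w q c E" using g(1) by simp
    have sub: "(\<lambda>i. min (u i) M') ` {1..n} \<union> {a} \<subset> A"
    proof
      show "(\<lambda>i. min (u i) M') ` {1..n} \<union> {a} \<subseteq> A"
      proof
        fix x assume "x \<in> (\<lambda>i. min (u i) M') ` {1..n} \<union> {a}"
        then show "x \<in> A" using M'A unfolding A_def by (auto simp: min_def)
      qed
      show "(\<lambda>i. min (u i) M') ` {1..n} \<union> {a} \<noteq> A"
      proof
        assume "(\<lambda>i. min (u i) M') ` {1..n} \<union> {a} = A"
        then have "M \<in> (\<lambda>i. min (u i) M') ` {1..n} \<union> {a}" using MA by simp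
        then show False using M'M False by (auto simp: min_def)
      qed
    qed
    have card: "card ((\<lambda>i. min (u i) M') ` {1..n} \<union> {a}) < card (u ` {1..n} \<union> {a})"
      using psubset_card_mono[OF finA(1) sub] A_def by simp
    have h2: "(M' - a) * g \<le> HH n w q c a (\<lambda>i. min (u i) M')"
      by (rule less.hyps[OF card]) (use less.prems(1) aM'' in auto)
    have Mb: "M \<le> b" using MA less.prems A_def by auto
    have "(b - a) * g \<le> (M - a) * g" using Mb g(2) by (simp add: mult_right_mono_neg)
    also have "\<dots> = (M - M') * g + (M' - a) * g" by (simp add: algebra_simps)
    also have "\<dots> \<le> (M - M') * GG n w q c E + HH n w q c a (\<lambda>i. min (u i) M')"
      using h2 gE M'M by (intro add_mono mult_left_mono) auto
    also have "\<dots> = HH n w q c a u" using HH_split[of n w q c a u M'] h1 by simp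
    finally show ?thesis .
  qed
qed


theorem mainTheorem9:
  fixes n :: nat and w :: "nat \<Rightarrow> nat \<Rightarrow> real" and r q dt m :: real and S :: "nat set"
  assumes w_sym: "\<forall>i\<in>{1..n}. \<forall>j\<in>{1..n}. w i j = w j i"
    and w_nonneg: "\<forall>i\<in>{1..n}. \<forall>j\<in>{1..n}. w i j \<ge> 0"
    and w_diag: "\<forall>i\<in>{1..n}. w i i = 0"
    and deg_pos: "\<forall>i\<in>{1..n}. deg n w i > 0"
    and r: "0 \<le> r" "r \<le> 1"
    and q: "1/2 \<le> q" "q \<le> 1"
    and conn: "connected_graph n w"
    and S: "S \<subseteq> {1..n}" "S \<noteq> {}" "S \<noteq> {1..n}"
    and dt: "dt > 0" and m: "m > 0"
  shows "(\<exists>u\<in>box n m. \<forall>v\<in>box n m. Fu n w r q dt S u \<le> Fu n w r q dt S v)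
       \<and> (\<forall>u\<in>box n m. (\<forall>v\<in>box n m. Fu n w r q dt S u \<le> Fu n w r q dt S v) \<longrightarrow>
            (\<forall>s. - m < s \<and> s < m \<longrightarrow>
               (\<forall>S'. S' \<subseteq> {1..n} \<longrightarrow>
                  FS n w r q dt {i\<in>{1..n}. u i > s} S \<le> FS n w r q dt S' S)))"
proof -
  define p where "p i = deg n w i powr r" for i
  define D where "D = dSet n w q (Sigma_bd n w S)"
  define c where "c i = (1/dt) * (sd n w q S i * p i)" for i
  have Fu_eq: "Fu n w r q dt S u = HH n w q c (-m) u - m * Lc n c (\<lambda>_. 1)" for u
  proof -
    have a: "(\<Sum>i\<in>{1..n}. c i * (u i - - m)) = (\<Sum>i\<in>{1..n}. c i * u i) + m * (\<Sum>i\<in>{1..n}. c i)"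
      by (simp add: algebra_simps sum.distrib sum_distrib_left)
    have b: "(1/dt) * (\<Sum>i\<in>{1..n}. u i * sd n w q S i * deg n w i powr r) = (\<Sum>i\<in>{1..n}. c i * u i)"
      by (simp add: c_def p_def sum_distrib_left algebra_simps)
    show ?thesis unfolding Fu_def HH_def Lc_def ip_def using a b by simp
  qed
  define K where "K = - TVa n w q (chi S) + (1/dt) * (\<Sum>i\<in>{1..n}. chi S i * D i * p i)"
  have FS_eq: "FS n w r q dt S' S = GG n w q c S' + K" for S'
  proof -
    have pt: "(1/dt) * ((chi S' i - chi S i) * ((chi S' i - chi S i) * D i) * p i)
        = c i * chi S' i + (1/dt) * (chi S i * D i * p i)" if i: "i \<in> {1..n}" for i
    proof -
      have "(chi S' i - chi S i) * ((chi S' i - chi S i) * D i)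
          = chi S' i * ((chi ({1..n} - S) i - chi S i) * D i) + chi S i * D i"
        using i by (cases "i \<in> S"; cases "i \<in> S'") (auto simp: chi_def)
      then show ?thesis unfolding c_def sd_def D_def by (simp add: algebra_simps)
    qed
    have "(1/dt) * ip n w r (\<lambda>i. chi S' i - chi S i) (\<lambda>i. (chi S' i - chi S i) * D i)
        = (\<Sum>i\<in>{1..n}. c i * chi S' i + (1/dt) * (chi S i * D i * p i))"
      unfolding ip_def sum_distrib_left p_def[symmetric] by (rule sum.cong) (use pt in auto)
    also have "\<dots> = Lc n c (chi S') + (1/dt) * (\<Sum>i\<in>{1..n}. chi S i * D i * p i)"
      unfolding Lc_def by (simp add: sum.distrib sum_distrib_left)
    finally show ?thesis unfolding FS_def GG_def K_def D_def[symmetric] by simp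
  qed
  define g where "g = Min (GG n w q c ` Pow {1..n})"
  have gle: "\<forall>E. E \<subseteq> {1..n} \<longrightarrow> g \<le> GG n w q c E" unfolding g_def by auto
  have "g \<in> GG n w q c ` Pow {1..n}" unfolding g_def by (intro Min_in) auto
  then obtain E0 where E0: "E0 \<subseteq> {1..n}" "g = GG n w q c E0" by auto
  have GG0: "GG n w q c {} = 0" unfolding GG_def TVa_def Lc_def chi_def by simp
  have g0: "g \<le> 0" using gle GG0 by force
  have lower: "2 * m * g \<le> HH n w q c (-m) v" if "v \<in> box n m" for v
    using HH_lower[OF gle g0, of "-m" v m] that m unfolding box_def by auto
  define us where "us i = - m + 2 * m * chi E0 i" for i
  have us_box: "us \<in> box n m" unfolding box_def us_def chi_def using m by auto
  have us_val: "HH n w q c (-m) us = 2 * m * g"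
    using HH_layer[of n us "-m" "2*m" E0 w q c] m E0 unfolding us_def by auto
  have part1: "\<forall>v\<in>box n m. Fu n w r q dt S us \<le> Fu n w r q dt S v"
    using lower us_val by (simp add: Fu_eq)
  have part2: "FS n w r q dt {i\<in>{1..n}. u i > s} S \<le> FS n w r q dt S' S"
    if u: "u \<in> box n m" and umin: "\<forall>v\<in>box n m. Fu n w r q dt S u \<le> Fu n w r q dt S v"
      and s: "- m < s" "s < m" and S': "S' \<subseteq> {1..n}" for u s S'
  proof -
    define E where "E = {i\<in>{1..n}. u i > s}"
    have Hu: "HH n w q c (-m) u \<le> 2 * m * g"
      using umin us_box us_val by (force simp: Fu_eq)
    define s' where "s' = Min (insert m (u ` E))"
    have fin: "finite (insert m (u ` E))" unfolding E_def by auto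
    have s'm: "s' \<le> m" unfolding s'_def using fin by simp
    have s's: "s < s'" unfolding s'_def using fin s E_def by (auto simp: Min_gr_iff)
    have s'u: "s' \<le> u i" if "i \<in> E" for i unfolding s'_def using fin that by simp
    define u1 where "u1 i = max (u i) s" for i
    define u2 where "u2 i = min (u i) s" for i
    have sp1: "HH n w q c (-m) u = HH n w q c s u1 + HH n w q c (-m) u2"
      using HH_split[of n w q c "-m" u s] unfolding u1_def u2_def by simp
    have sp2: "HH n w q c s u1 = HH n w q c s' (\<lambda>i. max (u1 i) s') + HH n w q c s (\<lambda>i. min (u1 i) s')"
      using HH_split[of n w q c s u1 s'] by simp
    have lay: "\<forall>i\<in>{1..n}. min (u1 i) s' = s + (s' - s) * chi E i"
    proof
      fix i assume i: "i \<in> {1..n}"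
      show "min (u1 i) s' = s + (s' - s) * chi E i"
      proof (cases "u i > s")
        case True
        then have "i \<in> E" using i E_def by auto
        then show ?thesis using s'u[of i] True by (simp add: u1_def chi_def)
      next
        case False
        then have "i \<notin> E" using E_def by auto
        then show ?thesis using False s's by (simp add: u1_def chi_def)
      qed
    qed
    have h2: "HH n w q c s (\<lambda>i. min (u1 i) s') = (s' - s) * GG n w q c E"
      by (rule HH_layer) (use lay s's in auto)
    have h1: "(m - s') * g \<le> HH n w q c s' (\<lambda>i. max (u1 i) s')"
      by (rule HH_lower[OF gle g0]) (use u s'm s s's in \<open>auto simp: box_def u1_def\<close>)
    have h3: "(s - - m) * g \<le> HH n w q c (-m) u2"
      by (rule HH_lower[OF gle g0]) (use u s in \<open>auto simp: box_def u2_def\<close>)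
    have "(m - s') * g + (s' - s) * GG n w q c E + (s - - m) * g \<le> 2 * m * g"
      using Hu sp1 sp2 h1 h2 h3 by linarith
    then have "(s' - s) * GG n w q c E \<le> (s' - s) * g" by (simp add: algebra_simps)
    then have "GG n w q c E \<le> g" using s's by simp
    also have "g \<le> GG n w q c S'" using gle S' by auto
    finally show ?thesis unfolding E_def[symmetric] using FS_eq by simp
  qed
  show ?thesis using us_box part1 part2 by blast
qed

end
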